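(* Fix $q\in V(G)$ and let $D\in\operatorname{Div}(G)$. Then $D$ is $q$-reduced if and only if $D\in|D|_q$ and $b_q(D)<b_q(D')$ for every $D'\in|D|_q$ with $D'\ne D$.
   Context: $G$ is a finite connected multigraph without loop edges, with vertex set $V(G)$ and edge set $E(G)$. A divisor is an element $D=\sum_{v}D(v)(v)$ of the free abelian group $\operatorname{Div}(G)$ on $V(G)$; $\deg(D)=\sum_vD(v)$. The Laplacian $\Delta$ sends a function $f:V(G)\to\mathbb{Q}$ to $\Delta(f)=\sum_v\Delta_v(f)(v)$ with $\Delta_v(f)=\sum_{\{v,w\}\in E(G)}(f(v)-f(w))$ (edges counted with multiplicity). $D_1\sim D_2$ means $D_1-D_2=\Delta(f)$ for some integer-valued $f$. For $q\in V(G)$, $|D|_q=\{E\in\operatorname{Div}(G): E\sim D,\ E(v)\ge 0\text{ for all }v\ne q\}$. For $A\subseteq V(G)$ and $v\in A$, $\operatorname{outdeg}_A(v)$ is the number of edges joining $v$ to $V(G)\setminus A$. A divisor $D$ is $q$-reduced if (i) $D(v)\ge 0$ for all $v\ne q$, and (ii) for every non-empty $A\subseteq V(G)\setminus\{q\}$ there is $v\in A$ with $D(v)<\operatorname{outdeg}_A(v)$. $Q$ is the Laplacian matrix with respect to a labeling of $V(G)$. For degree-zero divisors $D_1,D_2$, the energy pairing is $\langle D_1,D_2\rangle=[D_1]^TL[D_2]$ for any generalized inverse $L$ of $Q$ ($QLQ=Q$), independent of $L$. For divisors $D,E$, $\langle D,E\rangle_q=\langle D-\deg(D)(q),\,E-\deg(E)(q)\rangle$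 and $b_q(D)=\langle\mathbf{1},D\rangle_q$ with $\mathbf{1}=\sum_{v\in V(G)}(v)$. *)

theory Defs
  imports Complex_Main
begin

definition multigraph :: "'v set \<Rightarrow> ('v \<Rightarrow> 'v \<Rightarrow> nat) \<Rightarrow> bool" where
  "multigraph V m \<longleftrightarrow> finite V \<and> V \<noteq> {} \<and>
     (\<forall>v w. m v w = m w v) \<and> (\<forall>v. m v v = 0) \<and>
     (\<forall>v w. (v \<notin> V \<or> w \<notin> V) \<longrightarrow> m v w = 0) \<and>
     (\<forall>v\<in>V. \<forall>w\<in>V. (\<lambda>x y. m x y > 0)\<^sup>*\<^sup>* v w)"

definition is_divisor :: "'v set \<Rightarrow> ('v \<Rightarrow> int) \<Rightarrow> bool" where
  "is_divisor V D \<longleftrightarrow> (\<forall>v. v \<notin> V \<longrightarrow> D v = 0)"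

definition div_deg :: "'v set \<Rightarrow> ('v \<Rightarrow> int) \<Rightarrow> int" where
  "div_deg V D = (\<Sum>v\<in>V. D v)"

definition point_div :: "'v \<Rightarrow> 'v \<Rightarrow> int" where
  "point_div q = (\<lambda>v. if v = q then 1 else 0)"

definition one_div :: "'v set \<Rightarrow> 'v \<Rightarrow> int" where
  "one_div V = (\<lambda>v. if v \<in> V then 1 else 0)"

definition laplacian :: "'v set \<Rightarrow> ('v \<Rightarrow> 'v \<Rightarrow> nat) \<Rightarrow> ('v \<Rightarrow> int) \<Rightarrow> 'v \<Rightarrow> int" where
  "laplacian V m f = (\<lambda>v. if v \<in> V then (\<Sum>w\<in>V. int (m v w) * (f v - f w)) else 0)"

definition lin_equiv :: "'v set \<Rightarrow> ('v \<Rightarrow> 'v \<Rightarrow> nat) \<Rightarrow> ('v \<Rightarrow> int) \<Rightarrow> ('v \<Rightarrow> int) \<Rightarrow> bool" where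
  "lin_equiv V m D1 D2 \<longleftrightarrow> (\<exists>f. (\<lambda>v. D1 v - D2 v) = laplacian V m f)"

definition complete_linsys :: "'v set \<Rightarrow> ('v \<Rightarrow> 'v \<Rightarrow> nat) \<Rightarrow> 'v \<Rightarrow> ('v \<Rightarrow> int) \<Rightarrow> ('v \<Rightarrow> int) set" where
  "complete_linsys V m q D =
     {E. is_divisor V E \<and> lin_equiv V m E D \<and> (\<forall>v\<in>V. v \<noteq> q \<longrightarrow> E v \<ge> 0)}"

definition outdeg :: "'v set \<Rightarrow> ('v \<Rightarrow> 'v \<Rightarrow> nat) \<Rightarrow> 'v set \<Rightarrow> 'v \<Rightarrow> int" where
  "outdeg V m A v = (\<Sum>w\<in>V - A. int (m v w))"

definition q_reduced :: "'v set \<Rightarrow> ('v \<Rightarrow> 'v \<Rightarrow> nat) \<Rightarrow> 'v \<Rightarrow> ('v \<Rightarrow> int) \<Rightarrow> bool" where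
  "q_reduced V m q D \<longleftrightarrow>
     (\<forall>v\<in>V. v \<noteq> q \<longrightarrow> D v \<ge> 0) \<and>
     (\<forall>A. A \<subseteq> V - {q} \<and> A \<noteq> {} \<longrightarrow> (\<exists>v\<in>A. D v < outdeg V m A v))"

definition lap_matrix :: "'v set \<Rightarrow> ('v \<Rightarrow> 'v \<Rightarrow> nat) \<Rightarrow> 'v \<Rightarrow> 'v \<Rightarrow> rat" where
  "lap_matrix V m v w = (if v = w then of_nat (\<Sum>u\<in>V. m v u) else - of_nat (m v w))"

definition gen_inverse :: "'v set \<Rightarrow> ('v \<Rightarrow> 'v \<Rightarrow> rat) \<Rightarrow> ('v \<Rightarrow> 'v \<Rightarrow> rat) \<Rightarrow> bool" where
  "gen_inverse V Q L \<longleftrightarrow>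
     (\<forall>i\<in>V. \<forall>j\<in>V. (\<Sum>k\<in>V. \<Sum>l\<in>V. Q i k * L k l * Q l j) = Q i j)"

text \<open>Energy pairing \<langle>D1,D2\<rangle> = [D1]^T L [D2] for a (chosen) generalized inverse L of Q;
  the value is independent of the choice for degree-zero divisors.\<close>
definition energy :: "'v set \<Rightarrow> ('v \<Rightarrow> 'v \<Rightarrow> nat) \<Rightarrow> ('v \<Rightarrow> int) \<Rightarrow> ('v \<Rightarrow> int) \<Rightarrow> rat" where
  "energy V m D1 D2 =
     (let L = (SOME L. gen_inverse V (lap_matrix V m) L)
      in (\<Sum>u\<in>V. \<Sum>w\<in>V. of_int (D1 u) * L u w * of_int (D2 w)))"

definition energy_q :: "'v set \<Rightarrow> ('v \<Rightarrow> 'v \<Rightarrow> nat) \<Rightarrow> 'v \<Rightarrow> ('v \<Rightarrow> int) \<Rightarrow> ('v \<Rightarrow> int) \<Rightarrow> rat" where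
  "energy_q V m q D E =
     energy V m (\<lambda>v. D v - div_deg V D * point_div q v) (\<lambda>v. E v - div_deg V E * point_div q v)"

definition b_q :: "'v set \<Rightarrow> ('v \<Rightarrow> 'v \<Rightarrow> nat) \<Rightarrow> 'v \<Rightarrow> ('v \<Rightarrow> int) \<Rightarrow> rat" where
  "b_q V m q D = energy_q V m q (one_div V) D"

end

theory Submission
  imports Defs "Jordan_Normal_Form.Determinant"
begin

lemma fin_inj_surj:
  fixes M :: "'a \<Rightarrow> 'a \<Rightarrow> rat" and S :: "'a set" and b :: "'a \<Rightarrow> rat"
  assumes fin: "finite S"
  and inj: "\<And>y. \<forall>v\<in>S. (\<Sum>k\<in>S. M v k * y k) = 0 \<Longrightarrow> \<forall>k\<in>S. y k = 0"
  shows "\<exists>y. \<forall>v\<in>S. (\<Sum>k\<in>S. M v k * y k) = b v"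
proof -
  define N where "N = card S"
  obtain e where e: "bij_betw e {0..<N} S" using ex_bij_betw_nat_finite[OF fin] N_def by blast
  define ie where "ie = inv_into {0..<N} e"
  have ie1: "\<And>s. s \<in> S \<Longrightarrow> ie s < N \<and> e (ie s) = s"
    using e unfolding ie_def by (metis atLeastLessThan_iff bij_betw_def bij_betw_inv_into_right inv_into_into)
  have ie2: "\<And>i. i < N \<Longrightarrow> ie (e i) = i"
    using e unfolding ie_def by (meson atLeastLessThan_iff bij_betw_inv_into_left zero_le)
  define A where "A = mat N N (\<lambda>(i,j). M (e i) (e j))"
  have A: "A \<in> carrier_mat N N" unfolding A_def by simp
  have key: "\<And>(v::rat vec) s. v \<in> carrier_vec N \<Longrightarrow> s \<in> S \<Longrightarrow>
      (\<Sum>k\<in>S. M s k * v $ ie k) = (A *\<^sub>v v) $ ie s"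
  proof -
    fix v :: "rat vec" and s assume v: "v \<in> carrier_vec N" and s: "s \<in> S"
    have "(A *\<^sub>v v) $ ie s = (\<Sum>j\<in>{0..<N}. M s (e j) * v $ j)"
      using ie1[OF s] v unfolding A_def by (simp add: mult_mat_vec_def scalar_prod_def)
    also have "\<dots> = (\<Sum>k\<in>S. M s k * v $ ie k)"
      using sum.reindex_bij_betw[OF e, of "\<lambda>k. M s k * v $ ie k"] by (simp add: ie2)
    finally show "(\<Sum>k\<in>S. M s k * v $ ie k) = (A *\<^sub>v v) $ ie s" by simp
  qed
  have "det A \<noteq> 0"
  proof
    assume "det A = 0"
    then obtain v where v: "v \<in> carrier_vec N" "v \<noteq> 0\<^sub>v N" "A *\<^sub>v v = 0\<^sub>v N"
      using det_0_iff_vec_prod_zero_field[OF A] by blast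
    have "\<forall>s\<in>S. (\<Sum>k\<in>S. M s k * v $ ie k) = 0"
      using key v ie1 by simp
    hence z: "\<forall>k\<in>S. v $ ie k = 0" using inj[of "\<lambda>k. v $ ie k"] by blast
    have "v = 0\<^sub>v N"
    proof (rule eq_vecI)
      fix i assume "i < dim_vec (0\<^sub>v N)"
      hence i: "i < N" by simp
      have "e i \<in> S" using e i by (auto simp: bij_betw_def)
      thus "v $ i = 0\<^sub>v N $ i" using z ie2[OF i] i by fastforce
    qed (use v in simp)
    with v show False by simp
  qed
  from det_non_zero_imp_unit[OF A this, of "()"]
  obtain B where B: "B \<in> carrier_mat N N" "A * B = 1\<^sub>m N"
    unfolding Units_def ring_mat_def by auto
  define bb where "bb = vec N (\<lambda>i. b (e i))"
  define z where "z = B *\<^sub>v bb"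
  have zc: "z \<in> carrier_vec N" using B unfolding z_def bb_def by simp
  have Az: "A *\<^sub>v z = bb"
  proof -
    have "bb \<in> carrier_vec N" unfolding bb_def by simp
    hence "A *\<^sub>v (B *\<^sub>v bb) = (A * B) *\<^sub>v bb" using assoc_mult_mat_vec[OF A B(1) \<open>bb \<in> carrier_vec N\<close>] by simp
    also have "\<dots> = bb" using B(2) \<open>bb \<in> carrier_vec N\<close> by simp
    finally show ?thesis unfolding z_def .
  qed
  show ?thesis
  proof (intro exI ballI)
    fix s assume s: "s \<in> S"
    show "(\<Sum>k\<in>S. M s k * z $ ie k) = b s"
      using key[OF zc s] Az ie1[OF s] unfolding bb_def by simp
  qed
qed


lemma mg_finite: "multigraph V m \<Longrightarrow> finite V" by (simp add: multigraph_def)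
lemma mg_sym: "multigraph V m \<Longrightarrow> m v w = m w v" by (simp add: multigraph_def)
lemma mg_loop: "multigraph V m \<Longrightarrow> m v v = 0" by (simp add: multigraph_def)
lemma mg_out: "multigraph V m \<Longrightarrow> v \<notin> V \<or> w \<notin> V \<Longrightarrow> m v w = 0" by (simp add: multigraph_def)

lemma mg_closed:
  assumes mg: "multigraph V m" and A: "A \<subseteq> V"
  and cl: "\<And>v w. v \<in> A \<Longrightarrow> 0 < m v w \<Longrightarrow> w \<in> A"
  and v: "v \<in> A" and w: "w \<in> V"
  shows "w \<in> A"
proof -
  have "(\<lambda>x y. m x y > 0)\<^sup>*\<^sup>* v w" using mg v w A unfolding multigraph_def by blast
  thus ?thesis
    by (induction rule: rtranclp_induct) (use v cl in auto)
qed

lemma Q_alt: "multigraph V m \<Longrightarrow>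
   lap_matrix V m v k = (if v = k then of_nat (\<Sum>u\<in>V. m v u) else 0) - of_nat (m v k)"
  by (auto simp: lap_matrix_def mg_loop)

lemma Q_sym: "multigraph V m \<Longrightarrow> lap_matrix V m v k = lap_matrix V m k v"
  by (auto simp: lap_matrix_def mg_sym)

lemma Q_mult:
  assumes mg: "multigraph V m" and v: "v \<in> V"
  shows "(\<Sum>k\<in>V. lap_matrix V m v k * y k) = (\<Sum>k\<in>V. of_nat (m v k) * (y v - y k))"
proof -
  have fin: "finite V" using mg by (rule mg_finite)
  have "(\<Sum>k\<in>V. lap_matrix V m v k * y k)
     = (\<Sum>k\<in>V. (if v = k then of_nat (\<Sum>u\<in>V. m v u) * y k else 0)) - (\<Sum>k\<in>V. of_nat (m v k) * y k)"
    unfolding sum_subtractf[symmetric] by (rule sum.cong) (simp_all add: Q_alt[OF mg] left_diff_distrib)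
  also have "(\<Sum>k\<in>V. (if v = k then of_nat (\<Sum>u\<in>V. m v u) * y k else 0)) = of_nat (\<Sum>u\<in>V. m v u) * y v"
    using fin v by (simp add: sum.delta)
  also have "of_nat (\<Sum>u\<in>V. m v u) * y v = (\<Sum>k\<in>V. of_nat (m v k) * y v)"
    by (simp add: sum_distrib_right)
  finally show ?thesis
    by (simp add: right_diff_distrib sum_subtractf)
qed

lemma Q_colsum:
  assumes mg: "multigraph V m" and k: "k \<in> V"
  shows "(\<Sum>v\<in>V. lap_matrix V m v k) = 0"
proof -
  have fin: "finite V" using mg by (rule mg_finite)
  have "(\<Sum>v\<in>V. lap_matrix V m v k) = (\<Sum>v\<in>V. (if v = k then of_nat (\<Sum>u\<in>V. m v u) else 0)) - (\<Sum>v\<in>V. of_nat (m v k))"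
    by (simp add: Q_alt[OF mg] sum_subtractf)
  also have "\<dots> = 0" using fin k by (simp add: sum.delta mg_sym[OF mg, of _ k])
  finally show ?thesis .
qed

lemma lap_Q:
  assumes mg: "multigraph V m" and v: "v \<in> V"
  shows "of_int (laplacian V m f v) = (\<Sum>k\<in>V. lap_matrix V m v k * of_int (f k))"
  unfolding Q_mult[OF mg v] using v by (simp add: laplacian_def)

lemma lap_sum:
  assumes mg: "multigraph V m"
  shows "(\<Sum>v\<in>V. laplacian V m f v) = 0"
proof -
  have "(\<Sum>v\<in>V. laplacian V m f v) = (\<Sum>v\<in>V. \<Sum>w\<in>V. int (m v w) * f v) - (\<Sum>v\<in>V. \<Sum>w\<in>V. int (m v w) * f w)"
    by (simp add: laplacian_def algebra_simps sum_subtractf)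
  also have "(\<Sum>v\<in>V. \<Sum>w\<in>V. int (m v w) * f w) = (\<Sum>w\<in>V. \<Sum>v\<in>V. int (m w v) * f w)"
    by (subst sum.swap) (simp add: mg_sym[OF mg])
  finally show ?thesis by simp
qed

lemma max_principle:
  fixes y :: "'v \<Rightarrow> rat"
  assumes mg: "multigraph V m" and q: "q \<in> V" and yq: "y q = 0"
  and h: "\<forall>v\<in>V - {q}. (\<Sum>k\<in>V. lap_matrix V m v k * y k) = 0"
  shows "\<forall>v\<in>V. y v \<le> 0"
proof (rule ccontr)
  assume "\<not> ?thesis"
  then obtain v0 where v0: "v0 \<in> V" "y v0 > 0" by force
  have fin: "finite V" using mg by (rule mg_finite)
  define M where "M = Max (y ` V)"
  have Mge: "\<And>w. w \<in> V \<Longrightarrow> y w \<le> M" unfolding M_def using fin by simp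
  have "M \<in> y ` V" unfolding M_def using fin v0 by (intro Max_in) auto
  then obtain a where a: "a \<in> V" "y a = M" by auto
  have Mpos: "M > 0" using Mge[OF v0(1)] v0 by simp
  define A where "A = {v\<in>V. y v = M}"
  have qA: "q \<notin> A" using Mpos yq unfolding A_def by auto
  have cl: "\<And>v w. v \<in> A \<Longrightarrow> 0 < m v w \<Longrightarrow> w \<in> A"
  proof -
    fix v w assume vA: "v \<in> A" and mvw: "0 < m v w"
    have vV: "v \<in> V" and yv: "y v = M" using vA by (auto simp: A_def)
    have wV: "w \<in> V" using mvw mg_out[OF mg, of v w] by auto
    have "v \<in> V - {q}" using vV vA qA by auto
    hence "(\<Sum>k\<in>V. of_nat (m v k) * (y v - y k)) = 0"
      using h Q_mult[OF mg vV, of y] by simp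
    moreover have "\<forall>k\<in>V. of_nat (m v k) * (y v - y k) \<ge> 0"
      using Mge yv by (simp add: mult_nonneg_nonneg)
    ultimately have "\<forall>k\<in>V. of_nat (m v k) * (y v - y k) = 0"
      using sum_nonneg_eq_0_iff[OF fin, of "\<lambda>k. of_nat (m v k) * (y v - y k)"] by simp
    hence "of_nat (m v w) * (y v - y w) = 0" using wV by blast
    hence "y w = M" using mvw yv by (simp del: of_nat_eq_0_iff) 
    thus "w \<in> A" using wV by (simp add: A_def)
  qed
  have "q \<in> A" by (rule mg_closed[OF mg _ cl, where v=a]) (use a q in \<open>auto simp: A_def\<close>)
  with qA show False by simp
qed

lemma sum_drop_q:
  assumes fin: "finite V" and q: "q \<in> V"
  shows "(\<Sum>k\<in>V. M k * (if k = q then 0 else y k)) = (\<Sum>k\<in>V-{q}. M k * (y k :: rat))"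
  by (simp add: sum.remove[OF fin q])

lemma inj_red:
  fixes y :: "'v \<Rightarrow> rat"
  assumes mg: "multigraph V m" and q: "q \<in> V"
  and h: "\<forall>v\<in>V-{q}. (\<Sum>k\<in>V-{q}. lap_matrix V m v k * y k) = 0"
  shows "\<forall>k\<in>V-{q}. y k = 0"
proof -
  have fin: "finite V" using mg by (rule mg_finite)
  define y' where "y' = (\<lambda>k. if k = q then 0 else y k)"
  have h': "\<forall>v\<in>V-{q}. (\<Sum>k\<in>V. lap_matrix V m v k * y' k) = 0"
    using h sum_drop_q[OF fin q] unfolding y'_def by simp
  have h'': "\<forall>v\<in>V-{q}. (\<Sum>k\<in>V. lap_matrix V m v k * (- y' k)) = 0"
    using h' by (simp add: sum_negf)
  have "\<forall>v\<in>V. y' v \<le> 0" by (rule max_principle[OF mg q _ h']) (simp add: y'_def)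
  moreover have "\<forall>v\<in>V. - y' v \<le> 0" by (rule max_principle[OF mg q _ h'']) (simp add: y'_def)
  ultimately show ?thesis
  proof (intro ballI)
    fix k assume k: "k \<in> V - {q}"
    assume a1: "\<forall>v\<in>V. y' v \<le> 0" and a2: "\<forall>v\<in>V. - y' v \<le> 0"
    have "y' k \<le> 0" "- y' k \<le> 0" using a1 a2 k by auto
    thus "y k = 0" using k unfolding y'_def by auto
  qed
qed

lemma surj_red:
  fixes b :: "'v \<Rightarrow> rat"
  assumes mg: "multigraph V m" and q: "q \<in> V"
  shows "\<exists>y. y q = 0 \<and> (\<forall>v\<in>V-{q}. (\<Sum>k\<in>V. lap_matrix V m v k * y k) = b v)"
proof -
  have fin: "finite V" using mg by (rule mg_finite)
  obtain y where y: "\<forall>v\<in>V-{q}. (\<Sum>k\<in>V-{q}. lap_matrix V m v k * y k) = b v"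
    using fin_inj_surj[of "V-{q}" "lap_matrix V m" b] fin inj_red[OF mg q] by blast
  show ?thesis
    by (rule exI[of _ "\<lambda>k. if k = q then 0 else y k"]) (use y sum_drop_q[OF fin q] in simp)
qed

lemma Qq_col:
  assumes mg: "multigraph V m" and q: "q \<in> V" and k: "k \<in> V"
  shows "lap_matrix V m q k = - (\<Sum>v\<in>V-{q}. lap_matrix V m v k)"
  using Q_colsum[OF mg k] sum.remove[OF mg_finite[OF mg] q, of "\<lambda>v. lap_matrix V m v k"] by simp

lemma gen_inv_ex:
  assumes mg: "multigraph V m" and q: "q \<in> V"
  shows "\<exists>L. gen_inverse V (lap_matrix V m) L"
proof -
  let ?Q = "lap_matrix V m"
  have fin: "finite V" using mg by (rule mg_finite)
  have "\<forall>l. \<exists>y. y q = 0 \<and> (\<forall>v\<in>V-{q}. (\<Sum>k\<in>V. ?Q v k * y k) = (if v = l then 1 else 0))"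
    by (intro allI surj_red[OF mg q])
  hence "\<exists>sol. \<forall>l. sol l q = 0 \<and> (\<forall>v\<in>V-{q}. (\<Sum>k\<in>V. ?Q v k * sol l k) = (if v = l then 1 else 0))"
    by (rule choice)
  then obtain sol where sol0: "\<forall>l. sol l q = 0 \<and> (\<forall>v\<in>V-{q}. (\<Sum>k\<in>V. ?Q v k * sol l k) = (if v = l then 1 else 0))"
    by blast
  have sol: "\<And>l v. v \<in> V-{q} \<Longrightarrow> (\<Sum>k\<in>V. ?Q v k * sol l k) = (if v = l then 1 else 0)"
    using sol0 by blast
  define L where "L = (\<lambda>k l. if l \<in> V - {q} then sol l k else 0)"
  have P1: "\<And>i l. i \<in> V-{q} \<Longrightarrow> l \<in> V \<Longrightarrow> (\<Sum>k\<in>V. ?Q i k * L k l) = (if i = l then 1 else 0)"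
  proof -
    fix i l assume i: "i \<in> V-{q}" and l: "l \<in> V"
    show "(\<Sum>k\<in>V. ?Q i k * L k l) = (if i = l then 1 else 0)"
    proof (cases "l = q")
      case True thus ?thesis using i unfolding L_def by auto
    next
      case False
      hence "(\<Sum>k\<in>V. ?Q i k * L k l) = (\<Sum>k\<in>V. ?Q i k * sol l k)"
        using l unfolding L_def by simp
      thus ?thesis using sol[OF i] by simp
    qed
  qed
  have P2: "\<And>l. l \<in> V \<Longrightarrow> (\<Sum>k\<in>V. ?Q q k * L k l) = (if l = q then 0 else -1)"
  proof -
    fix l assume l: "l \<in> V"
    have "(\<Sum>k\<in>V. ?Q q k * L k l) = (\<Sum>k\<in>V. - (\<Sum>v\<in>V-{q}. ?Q v k * L k l))"
      by (rule sum.cong) (simp_all add: Qq_col[OF mg q] sum_distrib_right)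
    also have "\<dots> = - (\<Sum>v\<in>V-{q}. \<Sum>k\<in>V. ?Q v k * L k l)"
      by (simp add: sum_negf sum.swap[of _ V])
    also have "\<dots> = - (\<Sum>v\<in>V-{q}. (if v = l then 1 else 0))"
      using P1 l by simp
    also have "\<dots> = (if l = q then 0 else -1)"
      using fin l by (simp add: sum.delta)
    finally show "(\<Sum>k\<in>V. ?Q q k * L k l) = (if l = q then 0 else -1)" .
  qed
  have "gen_inverse V ?Q L"
    unfolding gen_inverse_def
  proof (intro ballI)
    fix i j assume i: "i \<in> V" and j: "j \<in> V"
    have "(\<Sum>k\<in>V. \<Sum>l\<in>V. ?Q i k * L k l * ?Q l j) = (\<Sum>l\<in>V. (\<Sum>k\<in>V. ?Q i k * L k l) * ?Q l j)"
      by (subst sum.swap) (simp add: sum_distrib_right)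
    also have "\<dots> = ?Q i j"
    proof (cases "i = q")
      case True
      have "(\<Sum>l\<in>V. (\<Sum>k\<in>V. ?Q i k * L k l) * ?Q l j) = (\<Sum>l\<in>V. (if l = q then 0 else - ?Q l j))"
        using P2 True by (intro sum.cong) auto
      also have "\<dots> = - (\<Sum>l\<in>V-{q}. ?Q l j)"
        using sum.remove[OF fin q, of "\<lambda>l. (if l = q then 0 else - ?Q l j)"]
        by (simp add: sum_negf)
      also have "\<dots> = ?Q i j" using Qq_col[OF mg q j] True by simp
      finally show ?thesis .
    next
      case False
      have "(\<Sum>l\<in>V. (\<Sum>k\<in>V. ?Q i k * L k l) * ?Q l j) = (\<Sum>l\<in>V. (if i = l then ?Q l j else 0))"
        using P1 False i by (intro sum.cong) auto
      also have "\<dots> = ?Q i j" using fin i by (simp add: sum.delta)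
      finally show ?thesis .
    qed
    finally show "(\<Sum>k\<in>V. \<Sum>l\<in>V. ?Q i k * L k l * ?Q l j) = ?Q i j" .
  qed
  thus ?thesis by blast
qed

lemma div_deg_one: "finite V \<Longrightarrow> div_deg V (one_div V) = int (card V)"
  by (simp add: div_deg_def one_div_def)

lemma pot_ex:
  assumes mg: "multigraph V m" and q: "q \<in> V"
  shows "\<exists>y. \<forall>u\<in>V. (\<Sum>k\<in>V. lap_matrix V m u k * y k)
            = of_int (one_div V u - div_deg V (one_div V) * point_div q u)"
proof -
  let ?Q = "lap_matrix V m"
  have fin: "finite V" using mg by (rule mg_finite)
  obtain y where y: "y q = 0" "\<forall>v\<in>V-{q}. (\<Sum>k\<in>V. ?Q v k * y k) = 1"
    using surj_red[OF mg q, of "\<lambda>_. 1"] by blast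
  have yq: "(\<Sum>k\<in>V. ?Q q k * y k) = 1 - of_nat (card V)"
  proof -
    have "(\<Sum>k\<in>V. ?Q q k * y k) = (\<Sum>k\<in>V. - (\<Sum>v\<in>V-{q}. ?Q v k * y k))"
      by (rule sum.cong) (simp_all add: Qq_col[OF mg q] sum_distrib_right)
    also have "\<dots> = - (\<Sum>v\<in>V-{q}. \<Sum>k\<in>V. ?Q v k * y k)"
      by (simp add: sum_negf sum.swap[of _ V])
    also have "\<dots> = - of_nat (card (V - {q}))" using y(2) by simp
    also have "\<dots> = 1 - of_nat (card V)"
      using card.remove[OF fin q] by simp
    finally show ?thesis .
  qed
  show ?thesis
  proof (intro exI ballI)
    fix u assume u: "u \<in> V"
    show "(\<Sum>k\<in>V. ?Q u k * y k) = of_int (one_div V u - div_deg V (one_div V) * point_div q u)"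
    proof (cases "u = q")
      case True
      thus ?thesis using yq u unfolding div_deg_one[OF fin] by (simp add: one_div_def point_div_def)
    next
      case False
      thus ?thesis using y(2) u by (simp add: one_div_def point_div_def)
    qed
  qed
qed

lemma alg:
  fixes Q L :: "'a \<Rightarrow> 'a \<Rightarrow> rat" and y g :: "'a \<Rightarrow> rat"
  assumes sym: "\<And>i j. i \<in> V \<Longrightarrow> j \<in> V \<Longrightarrow> Q i j = Q j i"
  and gi: "\<And>i j. i \<in> V \<Longrightarrow> j \<in> V \<Longrightarrow> (\<Sum>k\<in>V. \<Sum>l\<in>V. Q i k * L k l * Q l j) = Q i j"
  shows "(\<Sum>u\<in>V. \<Sum>w\<in>V. (\<Sum>k\<in>V. Q u k * y k) * L u w * (\<Sum>l\<in>V. Q w l * g l))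
       = (\<Sum>l\<in>V. (\<Sum>k\<in>V. Q l k * y k) * g l)"
proof -
  have "(\<Sum>u\<in>V. \<Sum>w\<in>V. (\<Sum>k\<in>V. Q u k * y k) * L u w * (\<Sum>l\<in>V. Q w l * g l))
      = (\<Sum>u\<in>V. \<Sum>w\<in>V. \<Sum>k\<in>V. \<Sum>l\<in>V. y k * g l * (Q k u * L u w * Q w l))"
    by (intro sum.cong refl) (simp add: sum_distrib_left sum_distrib_right sym mult_ac)
  also have "\<dots> = (\<Sum>u\<in>V. \<Sum>k\<in>V. \<Sum>w\<in>V. \<Sum>l\<in>V. y k * g l * (Q k u * L u w * Q w l))"
    by (rule sum.cong[OF refl], rule sum.swap)
  also have "\<dots> = (\<Sum>k\<in>V. \<Sum>u\<in>V. \<Sum>w\<in>V. \<Sum>l\<in>V. y k * g l * (Q k u * L u w * Q w l))"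
    by (rule sum.swap)
  also have "\<dots> = (\<Sum>k\<in>V. \<Sum>u\<in>V. \<Sum>l\<in>V. \<Sum>w\<in>V. y k * g l * (Q k u * L u w * Q w l))"
    by (rule sum.cong[OF refl], rule sum.cong[OF refl], rule sum.swap)
  also have "\<dots> = (\<Sum>k\<in>V. \<Sum>l\<in>V. \<Sum>u\<in>V. \<Sum>w\<in>V. y k * g l * (Q k u * L u w * Q w l))"
    by (rule sum.cong[OF refl], rule sum.swap)
  also have "\<dots> = (\<Sum>k\<in>V. \<Sum>l\<in>V. y k * g l * Q k l)"
    by (rule sum.cong[OF refl], rule sum.cong[OF refl]) (simp add: sum_distrib_left[symmetric] gi)
  also have "\<dots> = (\<Sum>l\<in>V. \<Sum>k\<in>V. y k * g l * Q k l)"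
    by (rule sum.swap)
  also have "\<dots> = (\<Sum>l\<in>V. (\<Sum>k\<in>V. Q l k * y k) * g l)"
    by (intro sum.cong refl) (simp add: sum_distrib_right sum_distrib_left sym mult_ac)
  finally show ?thesis .
qed

lemma bdiff:
  assumes mg: "multigraph V m" and q: "q \<in> V"
  and eq: "(\<lambda>v. D' v - D v) = laplacian V m f"
  shows "b_q V m q D' - b_q V m q D = of_int (\<Sum>v\<in>V. f v - f q)"
proof -
  let ?Q = "lap_matrix V m"
  define L where "L = (SOME L. gen_inverse V ?Q L)"
  have gi: "gen_inverse V ?Q L" unfolding L_def using gen_inv_ex[OF mg q] by (rule someI_ex)
  have fin: "finite V" using mg by (rule mg_finite)
  define X where "X = (\<lambda>v. one_div V v - div_deg V (one_div V) * point_div q v)"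
  obtain y where y: "\<forall>u\<in>V. (\<Sum>k\<in>V. ?Q u k * y k) = of_int (X u)"
    using pot_ex[OF mg q] unfolding X_def by blast
  have dv: "\<And>v. D' v - D v = laplacian V m f v" using eq by metis
  have deg: "div_deg V D' = div_deg V D"
  proof -
    have "div_deg V D' - div_deg V D = (\<Sum>v\<in>V. laplacian V m f v)"
      unfolding div_deg_def sum_subtractf[symmetric] using dv by simp
    thus ?thesis using lap_sum[OF mg] by simp
  qed
  define E' where "E' = (\<lambda>v. D' v - div_deg V D' * point_div q v)"
  define E where "E = (\<lambda>v. D v - div_deg V D * point_div q v)"
  have bq: "\<And>F. b_q V m q F = (\<Sum>u\<in>V. \<Sum>w\<in>V. of_int (X u) * L u w * of_int (F w - div_deg V F * point_div q w))"
    unfolding b_q_def energy_q_def energy_def X_def L_def Let_def by simp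
  have "b_q V m q D' - b_q V m q D = (\<Sum>u\<in>V. \<Sum>w\<in>V. of_int (X u) * L u w * of_int (laplacian V m f w))"
    unfolding bq sum_subtractf[symmetric]
    by (intro sum.cong refl) (simp add: deg dv[symmetric] algebra_simps)
  also have "\<dots> = (\<Sum>u\<in>V. \<Sum>w\<in>V. (\<Sum>k\<in>V. ?Q u k * y k) * L u w * (\<Sum>l\<in>V. ?Q w l * of_int (f l)))"
    by (intro sum.cong refl) (simp add: y lap_Q[OF mg])
  also have "\<dots> = (\<Sum>l\<in>V. (\<Sum>k\<in>V. ?Q l k * y k) * of_int (f l))"
    by (rule alg) (use Q_sym[OF mg] gi in \<open>auto simp: gen_inverse_def\<close>)
  also have "\<dots> = (\<Sum>l\<in>V. of_int (X l * f l))"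
    by (intro sum.cong refl) (simp add: y)
  also have "\<dots> = of_int (\<Sum>v\<in>V. f v - f q)"
  proof -
    have "(\<Sum>l\<in>V. X l * f l) = (\<Sum>l\<in>V. f l - (if l = q then int (card V) * f q else 0))"
      unfolding X_def div_deg_one[OF fin] by (intro sum.cong refl) (auto simp: one_div_def point_div_def algebra_simps)
    also have "\<dots> = (\<Sum>v\<in>V. f v) - int (card V) * f q"
      using fin q by (simp add: sum_subtractf sum.delta)
    also have "\<dots> = (\<Sum>v\<in>V. f v - f q)" by (simp add: sum_subtractf)
    finally show ?thesis by (metis of_int_sum)
  qed
  finally show ?thesis .
qed

theorem mainTheorem10:
  fixes V :: "'v set" and m :: "'v \<Rightarrow> 'v \<Rightarrow> nat" and q :: 'v and D :: "'v \<Rightarrow> int"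
  assumes "multigraph V m" and "q \<in> V" and "is_divisor V D"
  shows "q_reduced V m q D \<longleftrightarrow>
           (D \<in> complete_linsys V m q D \<and>
            (\<forall>D' \<in> complete_linsys V m q D. D' \<noteq> D \<longrightarrow> b_q V m q D < b_q V m q D'))"
proof -
  note mg = assms(1) and q = assms(2) and dD = assms(3)
  have fin: "finite V" using mg by (rule mg_finite)
  show ?thesis
  proof
    assume red: "q_reduced V m q D"
    have nn: "\<forall>v\<in>V. v \<noteq> q \<longrightarrow> D v \<ge> 0" using red by (simp add: q_reduced_def)
    have "lin_equiv V m D D" unfolding lin_equiv_def
      by (rule exI[of _ "\<lambda>_. (0::int)"]) (simp add: laplacian_def fun_eq_iff)
    hence DD: "D \<in> complete_linsys V m q D" using dD nn by (simp add: complete_linsys_def)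
    have "b_q V m q D < b_q V m q D'" if D': "D' \<in> complete_linsys V m q D" "D' \<noteq> D" for D'
    proof -
      from D' obtain f where f: "(\<lambda>v. D' v - D v) = laplacian V m f"
        unfolding complete_linsys_def lin_equiv_def by blast
      have dv: "\<And>v. D' v = D v + laplacian V m f v" using f by (metis add_diff_cancel_left' diff_add_cancel)
      have dD': "is_divisor V D'" and nn': "\<forall>v\<in>V. v \<noteq> q \<longrightarrow> D' v \<ge> 0"
        using D' by (auto simp: complete_linsys_def)
      have ge: "\<forall>v\<in>V. f q \<le> f v"
      proof (rule ccontr)
        assume "\<not> ?thesis"
        then obtain v0 where v0: "v0 \<in> V" "f v0 < f q" by force
        define M where "M = Min (f ` V)"
        have Mle: "\<And>w. w \<in> V \<Longrightarrow> M \<le> f w" unfolding M_def using fin by simp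
        have "M \<in> f ` V" unfolding M_def using fin v0 by (intro Min_in) auto
        then obtain a where a: "a \<in> V" "f a = M" by auto
        define A where "A = {v\<in>V. f v = M}"
        have MA: "M < f q" using Mle[OF v0(1)] v0 by simp
        have Asub: "A \<subseteq> V - {q}" using MA by (auto simp: A_def)
        have Ane: "A \<noteq> {}" using a by (auto simp: A_def)
        obtain v where vA: "v \<in> A" and lt: "D v < outdeg V m A v"
          using red Asub Ane unfolding q_reduced_def by blast
        have vV: "v \<in> V" and fv: "f v = M" and vq: "v \<noteq> q" using vA Asub by (auto simp: A_def)
        have "laplacian V m f v = (\<Sum>w\<in>V. int (m v w) * (f v - f w))"
          using vV by (simp add: laplacian_def)
        also have "\<dots> \<le> (\<Sum>w\<in>V. - (if w \<in> A then 0 else int (m v w)))"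
        proof (rule sum_mono)
          fix w assume w: "w \<in> V"
          show "int (m v w) * (f v - f w) \<le> - (if w \<in> A then 0 else int (m v w))"
          proof (cases "w \<in> A")
            case True thus ?thesis using fv by (simp add: A_def)
          next
            case False
            hence "f v - f w \<le> -1" using fv Mle[OF w] w by (force simp: A_def)
            hence "int (m v w) * (f v - f w) \<le> int (m v w) * (-1)"
              by (intro mult_left_mono) auto
            thus ?thesis using False by simp
          qed
        qed
        also have "\<dots> = - outdeg V m A v"
          unfolding outdeg_def using fin Asub
          by (simp add: sum_negf sum.If_cases Diff_eq Int_commute)
        finally have "D' v < 0" using dv[of v] lt by simp
        thus False using nn' vV vq by auto
      qed
      have "(\<Sum>v\<in>V. f v - f q) > 0"
      proof (rule ccontr)
        assume "\<not> ?thesis"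
        moreover have "\<forall>v\<in>V. f v - f q \<ge> 0" using ge by auto
        moreover have nn0: "\<And>v. v \<in> V \<Longrightarrow> 0 \<le> f v - f q" using ge by auto
        ultimately have s0: "(\<Sum>v\<in>V. f v - f q) = 0"
          using sum_nonneg[of V "\<lambda>v. f v - f q", OF nn0] by linarith
        have "\<forall>v\<in>V. f v - f q = 0"
          using sum_nonneg_eq_0_iff[OF fin, of "\<lambda>v. f v - f q"] nn0 s0 by blast
        hence "\<And>v. laplacian V m f v = 0" by (simp add: laplacian_def)
        hence "D' = D" using dv by auto
        with D'(2) show False by simp
      qed
      moreover have "b_q V m q D' - b_q V m q D = of_int (\<Sum>v\<in>V. f v - f q)"
        by (rule bdiff[OF mg q f])
      ultimately show ?thesis by (metis of_int_0_less_iff diff_gt_0_iff_gt)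
    qed
    thus "D \<in> complete_linsys V m q D \<and>
          (\<forall>D' \<in> complete_linsys V m q D. D' \<noteq> D \<longrightarrow> b_q V m q D < b_q V m q D')"
      using DD by blast
  next
    assume H: "D \<in> complete_linsys V m q D \<and>
          (\<forall>D' \<in> complete_linsys V m q D. D' \<noteq> D \<longrightarrow> b_q V m q D < b_q V m q D')"
    have nn: "\<forall>v\<in>V. v \<noteq> q \<longrightarrow> D v \<ge> 0" using H by (simp add: complete_linsys_def)
    show "q_reduced V m q D"
      unfolding q_reduced_def
    proof (intro conjI nn allI impI)
      fix A assume A: "A \<subseteq> V - {q} \<and> A \<noteq> {}"
      show "\<exists>v\<in>A. D v < outdeg V m A v"
      proof (rule ccontr)
        assume "\<not> ?thesis"
        hence ge: "\<forall>v\<in>A. outdeg V m A v \<le> D v" by auto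
        define f where "f = (\<lambda>v. if v \<in> A then -1 else (0::int))"
        define D' where "D' = (\<lambda>v. D v + laplacian V m f v)"
        have eq: "(\<lambda>v. D' v - D v) = laplacian V m f" unfolding D'_def by simp
        have lapA: "laplacian V m f v = - outdeg V m A v" if v: "v \<in> A" for v
        proof -
          have vV: "v \<in> V" using v A by auto
          have "laplacian V m f v = (\<Sum>w\<in>V. - (if w \<in> A then 0 else int (m v w)))"
            using vV v unfolding laplacian_def f_def by (auto intro!: sum.cong)
          also have "\<dots> = - outdeg V m A v"
            unfolding outdeg_def using fin A
            by (simp add: sum_negf sum.If_cases Diff_eq Int_commute)
          finally show ?thesis .
        qed
        have lapN: "laplacian V m f v \<ge> 0" if v: "v \<notin> A" for v
          unfolding laplacian_def f_def using v by (auto intro!: sum_nonneg)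
        have "D' \<in> complete_linsys V m q D"
          unfolding complete_linsys_def lin_equiv_def
        proof (intro CollectI conjI exI ballI impI)
          show "is_divisor V D'" using dD unfolding is_divisor_def D'_def laplacian_def by simp
          show "(\<lambda>v. D' v - D v) = laplacian V m f" by (rule eq)
          fix v assume v: "v \<in> V" "v \<noteq> q"
          show "0 \<le> D' v"
          proof (cases "v \<in> A")
            case True thus ?thesis using lapA[OF True] ge unfolding D'_def by auto
          next
            case False thus ?thesis using lapN[OF False] nn v unfolding D'_def by auto
          qed
        qed
        have "b_q V m q D' - b_q V m q D = of_int (\<Sum>v\<in>V. f v - f q)"
          by (rule bdiff[OF mg q eq])
        also have "(\<Sum>v\<in>V. f v - f q) = - int (card A)"
        proof -
          have fq: "f q = 0" using A unfolding f_def by auto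
          have "(\<Sum>v\<in>V. f v - f q) = (\<Sum>v\<in>V. if v \<in> A then -1 else 0)" using fq unfolding f_def by simp
          also have "\<dots> = - int (card (V \<inter> A))" using fin by (simp add: sum.If_cases)
          also have "V \<inter> A = A" using A by auto
          finally show ?thesis by simp
        qed
        finally have "b_q V m q D' - b_q V m q D = - of_nat (card A)" by simp
        moreover have "card A > 0" using A fin by (meson Diff_subset card_gt_0_iff rev_finite_subset subset_trans)
        ultimately have lt: "b_q V m q D' < b_q V m q D" by simp
        show False
        proof (cases "D' = D")
          case True thus False using lt by simp
        next
          case False thus False using H \<open>D' \<in> complete_linsys V m q D\<close> lt by force
        qed
      qed
    qed
  qed
qed

end
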